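(* Let $P=\Bbbk[x_1,x_2,x_3]$ with Poisson bracket $\{x_1,x_2\}=x_2^2$, $\{x_2,x_3\}=3x_1^2$, $\{x_3,x_1\}=2x_2x_3$. Then $\mathrm{PAut}_{\mathrm{gr}}(P)=\{a\cdot\mathrm{id}: a\in\Bbbk^\times\}$, i.e. every graded Poisson automorphism acts on $P_1$ as a nonzero scalar, and $P$ has no Poisson reflections.
   Context: $\Bbbk$ is algebraically closed of characteristic $0$; $P$ has the standard grading. A graded Poisson automorphism is a degree-preserving bijective algebra homomorphism preserving the bracket. A Poisson reflection is a finite-order graded Poisson automorphism $\phi$ with $\phi|_{P_1}$ having eigenvalues $1,1,\xi$ for a primitive root of unity $\xi\neq1$. *)

theory Defs
  imports "HOL-Library.Poly_Mapping" "HOL-Computational_Algebra.Polynomial"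
    "Jordan_Normal_Form.Char_Poly"
begin

datatype var = X1 | X2 | X3

type_synonym 'k mpoly3 = "(var \<Rightarrow>\<^sub>0 nat) \<Rightarrow>\<^sub>0 'k"

definition Var :: "var \<Rightarrow> 'k::comm_ring_1 mpoly3" where
  "Var v = Poly_Mapping.single (Poly_Mapping.single v 1) 1"

definition Const :: "'k::comm_ring_1 \<Rightarrow> 'k mpoly3" where
  "Const c = Poly_Mapping.single 0 c"

definition mon_deg :: "(var \<Rightarrow>\<^sub>0 nat) \<Rightarrow> nat" where
  "mon_deg m = (\<Sum>v\<in>Poly_Mapping.keys m. Poly_Mapping.lookup m v)"

text \<open>Homogeneous of degree d (the zero polynomial is homogeneous of every degree);
  P_d is the set of such polynomials.\<close>
definition homog :: "nat \<Rightarrow> 'k::comm_ring_1 mpoly3 \<Rightarrow> bool" where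
  "homog d p \<longleftrightarrow> (\<forall>m\<in>Poly_Mapping.keys p. mon_deg m = d)"

definition pd :: "var \<Rightarrow> 'k::comm_ring_1 mpoly3 \<Rightarrow> 'k mpoly3" where
  "pd v p = Abs_poly_mapping (\<lambda>m. of_nat (Poly_Mapping.lookup m v + 1)
              * Poly_Mapping.lookup p (m + Poly_Mapping.single v 1))"

fun gen_br :: "var \<Rightarrow> var \<Rightarrow> 'k::comm_ring_1 mpoly3" where
  "gen_br X1 X2 = Var X2 ^ 2"
| "gen_br X2 X1 = - (Var X2 ^ 2)"
| "gen_br X2 X3 = 3 * Var X1 ^ 2"
| "gen_br X3 X2 = - (3 * Var X1 ^ 2)"
| "gen_br X3 X1 = 2 * Var X2 * Var X3"
| "gen_br X1 X3 = - (2 * Var X2 * Var X3)"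
| "gen_br _ _ = 0"

text \<open>The Poisson bracket on P: the unique biderivation extending the generator brackets,
  {f,g} = sum_{i,j} (d f/d x_i) (d g/d x_j) {x_i,x_j}.\<close>
definition pbr :: "'k::comm_ring_1 mpoly3 \<Rightarrow> 'k mpoly3 \<Rightarrow> 'k mpoly3" where
  "pbr f g = (\<Sum>i\<in>{X1,X2,X3}. \<Sum>j\<in>{X1,X2,X3}. pd i f * pd j g * gen_br i j)"

definition gr_poisson_aut :: "('k::comm_ring_1 mpoly3 \<Rightarrow> 'k mpoly3) \<Rightarrow> bool" where
  "gr_poisson_aut \<phi> \<longleftrightarrow>
     bij \<phi>
   \<and> (\<forall>f g. \<phi> (f + g) = \<phi> f + \<phi> g)
   \<and> (\<forall>f g. \<phi> (f * g) = \<phi> f * \<phi> g)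
   \<and> \<phi> 1 = 1
   \<and> (\<forall>c f. \<phi> (Const c * f) = Const c * \<phi> f)
   \<and> (\<forall>d f. homog d f \<longrightarrow> homog d (\<phi> f))
   \<and> (\<forall>f g. \<phi> (pbr f g) = pbr (\<phi> f) (\<phi> g))"

text \<open>Matrix of the restriction of phi to P_1 with respect to the basis x1,x2,x3
  (column j = coordinates of phi(x_j)).\<close>
definition lin_mat :: "('k::comm_ring_1 mpoly3 \<Rightarrow> 'k mpoly3) \<Rightarrow> 'k mat" where
  "lin_mat \<phi> = mat 3 3 (\<lambda>(i,j). Poly_Mapping.lookup (\<phi> (Var ([X1,X2,X3] ! j)))
                                  (Poly_Mapping.single ([X1,X2,X3] ! i) 1))"

definition poisson_reflection :: "('k::comm_ring_1 mpoly3 \<Rightarrow> 'k mpoly3) \<Rightarrow> bool" where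
  "poisson_reflection \<phi> \<longleftrightarrow>
     gr_poisson_aut \<phi>
   \<and> (\<exists>n>0. (\<phi> ^^ n) = id)
   \<and> (\<exists>\<xi> r. r > 0 \<and> \<xi> ^ r = 1 \<and> \<xi> \<noteq> 1
        \<and> char_poly (lin_mat \<phi>) = [:-1, 1:] ^ 2 * [:-\<xi>, 1:])"

end

theory Submission
  imports Defs
begin

abbreviation M :: "var \<Rightarrow> (var \<Rightarrow>\<^sub>0 nat)" where "M v \<equiv> Poly_Mapping.single v 1"

lemma UNIV_var: "(UNIV :: var set) = {X1, X2, X3}"
  by (auto intro: var.exhaust) 

lemma mon_eq_iff: "(m::var \<Rightarrow>\<^sub>0 nat) = m' \<longleftrightarrow>
   Poly_Mapping.lookup m X1 = Poly_Mapping.lookup m' X1 \<and> Poly_Mapping.lookup m X2 = Poly_Mapping.lookup m' X2 \<and> Poly_Mapping.lookup m X3 = Poly_Mapping.lookup m' X3"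
  apply (rule iffI, simp)
  apply (rule poly_mapping_eqI)
  subgoal for k by (cases k) auto
  done

lemma finite_var[simp]: "finite (UNIV :: var set)" by (simp add: UNIV_var)

lemma mon_deg_eq: "mon_deg m = Poly_Mapping.lookup m X1 + Poly_Mapping.lookup m X2 + Poly_Mapping.lookup m X3"
proof -
  have "mon_deg m = (\<Sum>v\<in>UNIV. Poly_Mapping.lookup m v)"
    unfolding mon_deg_def
    by (rule sum.mono_neutral_left) (auto simp: UNIV_var[symmetric] in_keys_iff)
  then show ?thesis by (simp add: UNIV_var)
qed

lemma gb12: "(gen_br X1 X2 :: 'k::comm_ring_1 mpoly3) = Poly_Mapping.single (M X2 + M X2) 1"
  by (simp add: Var_def power2_eq_square mult_single)
lemma gb21: "(gen_br X2 X1 :: 'k::comm_ring_1 mpoly3) = Poly_Mapping.single (M X2 + M X2) (-1)"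
  by (simp add: Var_def power2_eq_square mult_single single_uminus)
lemma gb23: "(gen_br X2 X3 :: 'k::comm_ring_1 mpoly3) = Poly_Mapping.single (M X1 + M X1) 3"
  by (simp add: Var_def power2_eq_square mult_single flip: single_numeral)
lemma gb32: "(gen_br X3 X2 :: 'k::comm_ring_1 mpoly3) = Poly_Mapping.single (M X1 + M X1) (-3)"
  by (simp add: Var_def power2_eq_square mult_single single_uminus flip: single_numeral)
lemma gb31: "(gen_br X3 X1 :: 'k::comm_ring_1 mpoly3) = Poly_Mapping.single (M X2 + M X3) 2"
  by (simp add: Var_def power2_eq_square mult_single flip: single_numeral)
lemma gb13: "(gen_br X1 X3 :: 'k::comm_ring_1 mpoly3) = Poly_Mapping.single (M X2 + M X3) (-2)"
  by (simp add: Var_def power2_eq_square mult_single single_uminus flip: single_numeral)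

lemma gb_diag: "gen_br X1 X1 = 0" "gen_br X2 X2 = 0" "gen_br X3 X3 = 0" by simp_all

definition lf :: "'k::comm_ring_1 \<Rightarrow> 'k \<Rightarrow> 'k \<Rightarrow> 'k mpoly3" where
  "lf a b c = Poly_Mapping.single (M X1) a + Poly_Mapping.single (M X2) b + Poly_Mapping.single (M X3) c"

definition cf :: "'k \<Rightarrow> 'k \<Rightarrow> 'k \<Rightarrow> var \<Rightarrow> 'k" where
  "cf a b c v = (case v of X1 \<Rightarrow> a | X2 \<Rightarrow> b | X3 \<Rightarrow> c)"

definition Q :: "'k::comm_ring_1 \<Rightarrow> 'k \<Rightarrow> 'k \<Rightarrow> 'k \<Rightarrow> 'k \<Rightarrow> 'k \<Rightarrow> 'k mpoly3" where
  "Q a11 a22 a33 a12 a13 a23 = Poly_Mapping.single (M X1 + M X1) a11 + Poly_Mapping.single (M X2 + M X2) a22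
    + Poly_Mapping.single (M X3 + M X3) a33 + Poly_Mapping.single (M X1 + M X2) a12
    + Poly_Mapping.single (M X1 + M X3) a13 + Poly_Mapping.single (M X2 + M X3) a23"

lemma pd_lf: "pd v (lf a b c) = Poly_Mapping.single 0 (cf a b c v)"
proof -
  have "(\<lambda>m. of_nat (Poly_Mapping.lookup m v + 1) * Poly_Mapping.lookup (lf a b c) (m + M v))
     = Poly_Mapping.lookup (Poly_Mapping.single 0 (cf a b c v))"
  proof
    fix m :: "var \<Rightarrow>\<^sub>0 nat"
    show "of_nat (Poly_Mapping.lookup m v + 1) * Poly_Mapping.lookup (lf a b c) (m + M v)
     = Poly_Mapping.lookup (Poly_Mapping.single 0 (cf a b c v)) m"
      by (cases v) (auto simp: lf_def cf_def lookup_add lookup_single when_def mon_eq_iff)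
  qed
  then show ?thesis unfolding pd_def by simp
qed

lemma Q_eq_iff: "Q a11 a22 a33 a12 a13 a23 = Q b11 b22 b33 b12 b13 b23 \<longleftrightarrow>
   a11 = b11 \<and> a22 = b22 \<and> a33 = b33 \<and> a12 = b12 \<and> a13 = b13 \<and> a23 = b23"
proof
  assume h: "Q a11 a22 a33 a12 a13 a23 = Q b11 b22 b33 b12 b13 b23"
  have "\<And>m. Poly_Mapping.lookup (Q a11 a22 a33 a12 a13 a23) m = Poly_Mapping.lookup (Q b11 b22 b33 b12 b13 b23) m"
    using h by simp
  from this[of "M X1 + M X1"] this[of "M X2 + M X2"] this[of "M X3 + M X3"]
       this[of "M X1 + M X2"] this[of "M X1 + M X3"] this[of "M X2 + M X3"]
  show "a11 = b11 \<and> a22 = b22 \<and> a33 = b33 \<and> a12 = b12 \<and> a13 = b13 \<and> a23 = b23"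
    by (simp_all add: Q_def lookup_add lookup_single when_def mon_eq_iff)
qed simp

lemma lf_mult: "lf p1 p2 p3 * lf q1 q2 q3 = Q (p1*q1) (p2*q2) (p3*q3) (p1*q2+p2*q1) (p1*q3+p3*q1) (p2*q3+p3*q2)"
  by (rule poly_mapping_eqI)
     (simp add: lf_def Q_def ring_distribs mult_single lookup_add lookup_single when_def mon_eq_iff add.commute)

lemma Const_Q: "Const c * Q a11 a22 a33 a12 a13 a23 = Q (c*a11) (c*a22) (c*a33) (c*a12) (c*a13) (c*a23)"
  by (simp add: Const_def Q_def ring_distribs mult_single)

lemma pbr_lf: "pbr (lf p1 p2 p3) (lf q1 q2 q3) =
   Q (3*(p2*q3 - p3*q2)) (p1*q2 - p2*q1) 0 0 0 (2*(p3*q1 - p1*q3))"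
  apply (simp add: pbr_def pd_lf cf_def gb12 gb21 gb23 gb32 gb31 gb13 gb_diag mult_single del: gen_br.simps)
  apply (rule poly_mapping_eqI)
  apply (simp add: Q_def lookup_add lookup_single when_def mon_eq_iff)
  done

lemma deg1: "mon_deg m = 1 \<Longrightarrow> m = M X1 \<or> m = M X2 \<or> m = M X3"
  by (simp add: mon_deg_eq mon_eq_iff lookup_single when_def) arith

lemma M_distinct: "M X1 \<noteq> M X2" "M X1 \<noteq> M X3" "M X2 \<noteq> M X3"
  "M X2 \<noteq> M X1" "M X3 \<noteq> M X1" "M X3 \<noteq> M X2"
  by (simp_all add: mon_eq_iff lookup_single when_def)

lemma homog1_lf: assumes "homog 1 f"
  shows "f = lf (Poly_Mapping.lookup f (M X1)) (Poly_Mapping.lookup f (M X2)) (Poly_Mapping.lookup f (M X3))"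
proof (rule poly_mapping_eqI)
  fix k
  show "Poly_Mapping.lookup f k = Poly_Mapping.lookup (lf (Poly_Mapping.lookup f (M X1)) (Poly_Mapping.lookup f (M X2)) (Poly_Mapping.lookup f (M X3))) k"
  proof (cases "k \<in> Poly_Mapping.keys f")
    case True
    then have "mon_deg k = 1" using assms by (simp add: homog_def)
    then have "k = M X1 \<or> k = M X2 \<or> k = M X3" by (rule deg1)
    then show ?thesis by (elim disjE; hypsubst; simp add: lf_def lookup_add lookup_single when_def mon_eq_iff)
  next
    case False
    then have "Poly_Mapping.lookup f k = 0" by (simp add: in_keys_iff)
    then show ?thesis by (auto simp: lf_def lookup_add lookup_single when_def)
  qed
qed

lemma Var_lf: "Var X1 = lf 1 0 0" "Var X2 = lf 0 1 0" "Var X3 = lf 0 0 1"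
  by (simp_all add: Var_def lf_def)

lemma homog_Var: "homog 1 (Var v)"
  by (cases v) (simp_all add: homog_def Var_def mon_deg_eq lookup_single when_def)

lemma Const_lf: "Const c * lf a b d = lf (c*a) (c*b) (c*d)"
  by (simp add: Const_def lf_def ring_distribs mult_single)

lemma lf_add: "lf a b c + lf a' b' c' = lf (a+a') (b+b') (c+c')"
  by (simp add: lf_def single_add algebra_simps)

lemma lf_Const: "lf a b c = Const a * Var X1 + Const b * Var X2 + Const c * Var X3"
  by (simp add: Var_lf Const_lf lf_add)

lemma br12: "pbr (Var X1) (Var X2) = (Var X2 * Var X2 :: 'k::comm_ring_1 mpoly3)"
  by (simp add: Var_lf pbr_lf lf_mult Q_eq_iff)
lemma br23: "pbr (Var X2) (Var X3) = (Const 3 * (Var X1 * Var X1) :: 'k::comm_ring_1 mpoly3)"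
  by (simp add: Var_lf pbr_lf lf_mult Const_Q Q_eq_iff)
lemma br31: "pbr (Var X3) (Var X1) = (Const 2 * (Var X2 * Var X3) :: 'k::comm_ring_1 mpoly3)"
  by (simp add: Var_lf pbr_lf lf_mult Const_Q Q_eq_iff)

lemma aut_scalar:
  fixes \<phi> :: "'k::field_char_0 mpoly3 \<Rightarrow> 'k mpoly3"
  assumes g: "gr_poisson_aut \<phi>"
  shows "\<exists>a. a \<noteq> 0 \<and> \<phi> (Var X1) = lf a 0 0 \<and> \<phi> (Var X2) = lf 0 a 0 \<and> \<phi> (Var X3) = lf 0 0 a"
proof -
  have bij: "bij \<phi>" and add: "\<And>f g. \<phi> (f + g) = \<phi> f + \<phi> g"
    and mul: "\<And>f g. \<phi> (f * g) = \<phi> f * \<phi> g"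
    and cst: "\<And>c f. \<phi> (Const c * f) = Const c * \<phi> f"
    and hom: "\<And>d f. homog d f \<Longrightarrow> homog d (\<phi> f)"
    and br: "\<And>f g. \<phi> (pbr f g) = pbr (\<phi> f) (\<phi> g)"
    using g unfolding gr_poisson_aut_def by blast+
  have z: "\<phi> 0 = 0" using add[of 0 0] by simp
  define p1 where "p1 = Poly_Mapping.lookup (\<phi> (Var X1)) (M X1)"
  define p2 where "p2 = Poly_Mapping.lookup (\<phi> (Var X1)) (M X2)"
  define p3 where "p3 = Poly_Mapping.lookup (\<phi> (Var X1)) (M X3)"
  define q1 where "q1 = Poly_Mapping.lookup (\<phi> (Var X2)) (M X1)"
  define q2 where "q2 = Poly_Mapping.lookup (\<phi> (Var X2)) (M X2)"
  define q3 where "q3 = Poly_Mapping.lookup (\<phi> (Var X2)) (M X3)"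
  define r1 where "r1 = Poly_Mapping.lookup (\<phi> (Var X3)) (M X1)"
  define r2 where "r2 = Poly_Mapping.lookup (\<phi> (Var X3)) (M X2)"
  define r3 where "r3 = Poly_Mapping.lookup (\<phi> (Var X3)) (M X3)"
  have P: "\<phi> (Var X1) = lf p1 p2 p3" unfolding p1_def p2_def p3_def
    by (rule homog1_lf[OF hom[OF homog_Var]])
  have Qq: "\<phi> (Var X2) = lf q1 q2 q3" unfolding q1_def q2_def q3_def
    by (rule homog1_lf[OF hom[OF homog_Var]])
  have R: "\<phi> (Var X3) = lf r1 r2 r3" unfolding r1_def r2_def r3_def
    by (rule homog1_lf[OF hom[OF homog_Var]])
  have E1: "lf q1 q2 q3 * lf q1 q2 q3 = pbr (lf p1 p2 p3) (lf q1 q2 q3)"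
    using br[of "Var X1" "Var X2"] by (simp add: br12 mul P Qq)
  have E2: "Const 3 * (lf p1 p2 p3 * lf p1 p2 p3) = pbr (lf q1 q2 q3) (lf r1 r2 r3)"
    using br[of "Var X2" "Var X3"] unfolding br23 cst unfolding mul P Qq R by simp
  have E3: "Const 2 * (lf q1 q2 q3 * lf r1 r2 r3) = pbr (lf r1 r2 r3) (lf p1 p2 p3)"
    using br[of "Var X3" "Var X1"] unfolding br31 cst unfolding mul P Qq R by simp
  note E1' = E1[unfolded lf_mult pbr_lf Q_eq_iff]
  note E2' = E2[unfolded lf_mult Const_Q pbr_lf Q_eq_iff]
  note E3' = E3[unfolded lf_mult Const_Q pbr_lf Q_eq_iff]
  have q3: "q3 = 0" using E1' by simp
  have p3: "p3 = 0" using E2' by simp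
  have q1: "q1 = 0" using E1' p3 q3 by simp
  have q2: "q2 \<noteq> 0"
  proof
    assume "q2 = 0"
    then have "\<phi> (Var X2) = \<phi> 0" using Qq q1 q3 z by (simp add: lf_def)
    then have "(Var X2 :: 'k mpoly3) = 0" using bij by (simp add: bij_def inj_eq)
    then have "Poly_Mapping.lookup (Var X2 :: 'k mpoly3) (M X2) = 0" by simp
    then show False by (simp add: Var_def)
  qed
  have p1: "p1 = q2" using E1' q1 q2 by (auto simp: algebra_simps)
  have p2: "p2 = 0" using E2' p1 q2 by auto
  have r3: "r3 = p1" using E2' p1 q2 q3 by (auto simp: algebra_simps)
  have r1: "r1 = 0" using E2' p1 q2 q1 p2 by auto
  have r2: "r2 = 0" using E3' p1 q2 q1 p2 r1 by (auto simp: algebra_simps)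
  show ?thesis using P Qq R p1 p2 p3 q1 q2 q3 r1 r2 r3 by auto
qed

lemma aut_homog1:
  fixes \<phi> :: "'k::field_char_0 mpoly3 \<Rightarrow> 'k mpoly3"
  assumes g: "gr_poisson_aut \<phi>"
  shows "\<exists>a. a \<noteq> 0 \<and> (\<forall>f. homog 1 f \<longrightarrow> \<phi> f = Const a * f)"
proof -
  obtain a where a: "a \<noteq> 0" "\<phi> (Var X1) = lf a 0 0" "\<phi> (Var X2) = lf 0 a 0" "\<phi> (Var X3) = lf 0 0 a"
    using aut_scalar[OF g] by blast
  have add: "\<And>f g. \<phi> (f + g) = \<phi> f + \<phi> g" and cst: "\<And>c f. \<phi> (Const c * f) = Const c * \<phi> f"
    using g unfolding gr_poisson_aut_def by blast+
  have "\<phi> f = Const a * f" if "homog 1 f" for f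
  proof -
    define c1 where "c1 = Poly_Mapping.lookup f (M X1)"
    define c2 where "c2 = Poly_Mapping.lookup f (M X2)"
    define c3 where "c3 = Poly_Mapping.lookup f (M X3)"
    have f: "f = lf c1 c2 c3" unfolding c1_def c2_def c3_def by (rule homog1_lf[OF that])
    show ?thesis unfolding f lf_Const[of c1] add cst a(2-4)
      by (simp add: Const_lf lf_add Var_lf algebra_simps)
  qed
  with a(1) show ?thesis by blast
qed

lemma lin_mat_scalar:
  fixes \<phi> :: "'k::field_char_0 mpoly3 \<Rightarrow> 'k mpoly3"
  assumes g: "gr_poisson_aut \<phi>"
  shows "\<exists>a. lin_mat \<phi> = mat 3 3 (\<lambda>(i,j). if i = j then a else 0)"
proof -
  obtain a where a: "a \<noteq> 0" "\<phi> (Var X1) = lf a 0 0" "\<phi> (Var X2) = lf 0 a 0" "\<phi> (Var X3) = lf 0 0 a"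
    using aut_scalar[OF g] by blast
  have "lin_mat \<phi> = mat 3 3 (\<lambda>(i,j). if i = j then a else 0)"
    unfolding lin_mat_def
  proof (rule cong_mat, simp, simp)
    fix i j :: nat assume "i < 3" "j < 3"
    then have "i \<in> {0,1,2}" "j \<in> {0,1,2}" by auto
    then show "(case (i, j) of (i, j) \<Rightarrow> Poly_Mapping.lookup (\<phi> (Var ([X1, X2, X3] ! j))) (M ([X1, X2, X3] ! i)))
      = (case (i, j) of (i, j) \<Rightarrow> if i = j then a else 0)"
      by (auto simp: a lf_def lookup_add lookup_single when_def mon_eq_iff)
  qed
  then show ?thesis by blast
qed

theorem lemma3p5p1:
  fixes dummy :: "'k::{alg_closed_field, field_char_0}"
  shows "(\<forall>\<phi> :: 'k mpoly3 \<Rightarrow> 'k mpoly3. gr_poisson_aut \<phi> \<longrightarrow>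
            (\<exists>a. a \<noteq> 0 \<and> (\<forall>f. homog 1 f \<longrightarrow> \<phi> f = Const a * f)))
       \<and> \<not> (\<exists>\<phi> :: 'k mpoly3 \<Rightarrow> 'k mpoly3. poisson_reflection \<phi>)"
proof
  show "\<forall>\<phi> :: 'k mpoly3 \<Rightarrow> 'k mpoly3. gr_poisson_aut \<phi> \<longrightarrow>
            (\<exists>a. a \<noteq> 0 \<and> (\<forall>f. homog 1 f \<longrightarrow> \<phi> f = Const a * f))"
    using aut_homog1 by blast
  show "\<not> (\<exists>\<phi> :: 'k mpoly3 \<Rightarrow> 'k mpoly3. poisson_reflection \<phi>)"
  proof
    assume "\<exists>\<phi> :: 'k mpoly3 \<Rightarrow> 'k mpoly3. poisson_reflection \<phi>"
    then obtain \<phi> :: "'k mpoly3 \<Rightarrow> 'k mpoly3" and \<xi> :: 'k where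
      g: "gr_poisson_aut \<phi>" and xi: "\<xi> \<noteq> 1"
      and cp: "char_poly (lin_mat \<phi>) = [:-1, 1:] ^ 2 * [:-\<xi>, 1:]"
      unfolding poisson_reflection_def by blast
    obtain a where L: "lin_mat \<phi> = mat 3 3 (\<lambda>(i,j). if i = j then a else 0)"
      using lin_mat_scalar[OF g] by blast
    have car: "lin_mat \<phi> \<in> carrier_mat 3 3" unfolding L by simp
    have ut: "upper_triangular (lin_mat \<phi>)" unfolding L upper_triangular_def by auto
    have "char_poly (lin_mat \<phi>) = (\<Prod>b \<leftarrow> diag_mat (lin_mat \<phi>). [:- b, 1:])"
      by (rule char_poly_upper_triangular[OF car ut])
    also have "diag_mat (lin_mat \<phi>) = [a, a, a]"
      unfolding L diag_mat_def by (simp add: upt_rec)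
    finally have e: "[:-a, 1:] ^ 3 = ([:-1, 1:] ^ 2 * [:-\<xi>, 1:] :: 'k poly)"
      using cp by (simp add: power3_eq_cube)
    have "poly ([:-a, 1:] ^ 3) 1 = poly ([:-1, 1:] ^ 2 * [:-\<xi>, 1:]) (1::'k)" using e by simp
    then have "a = 1" by simp
    have "poly ([:-a, 1:] ^ 3) \<xi> = poly ([:-1, 1:] ^ 2 * [:-\<xi>, 1:]) \<xi>" using e by simp
    with \<open>a = 1\<close> have "\<xi> = 1" by simp
    with xi show False by simp
  qed
qed

end
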